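(* Let $m\ge 1$ and, for each unit $i\in[m]=\{1,\dots,m\}$, let $n_i\ge 2$ observations be generated as $X_{ij}=\mu_i+\epsilon_{ij}$, $j\in[n_i]$, where $\mu_i$ is an unknown constant and $\mathbb{E}(\epsilon_{ij})=0$. Let $\mathcal{H}_0=\{i\in[m]:\mu_i=0\}$ and write $\mathbf{X}_i=(X_{ij}:j\in[n_i])$. Assume that for every $i\in\mathcal{H}_0$ the errors $\{\epsilon_{ij}:j\in[n_i]\}$ are i.i.d. conditional on $(\mathbf{X}_1,\dots,\mathbf{X}_{i-1},\mathbf{X}_{i+1},\dots,\mathbf{X}_m)$, with a conditional density $f_i^{\epsilon}(\cdot\mid \mathbf{X}_1,\dots,\mathbf{X}_{i-1},\mathbf{X}_{i+1},\dots,\mathbf{X}_m)$ that is symmetric about zero, i.e. $f_i^{\epsilon}(-x\mid\cdot)=f_i^{\epsilon}(x\mid\cdot)$ for all $x$. Construct $(T_i,T_i^0)$, $i\in[m]$, as follows. Randomly (independently of the data) partition $[n_i]$ into $\mathcal{N}_{i1},\mathcal{N}_{i2}$ with $n_{i1}=|\mathcal{N}_{i1}|=\lceil n_i/2\rceil$ and $n_{i2}=n_i-n_{i1}$. Let $\bar X_{ik}=n_{ik}^{-1}\sum_{j\in\mathcal{N}_{ik}}X_{ij}$ and $S_{ik}^2=(n_{ik}-1)^{-1}\sum_{j\in\mathcal{N}_{ik}}(X_{ij}-\bar X_{ik})^2$ for $k=1,2$ (whenever $n_{ik}\ge 2$). Set $V_i=\bar X_{i1}+\bar X_{i2}$, $V_i^0=\bar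 X_{i1}-\bar X_{i2}$. - If $n_i\ge 4$: $S_i=\sqrt{\frac{n_i}{n_{i1}n_{i2}}\cdot\frac{(n_{i1}-1)S_{i1}^2+(n_{i2}-1)S_{i2}^2}{n_i-2}}$ and $T_i=\Phi^{-1}\{G_{t,n_i-2}(V_i/S_i)\}$, $T_i^0=\Phi^{-1}\{G_{t,n_i-2}(V_i^0/S_i)\}$. - If $n_i=3$: the same formulas for $T_i,T_i^0$ with $S_i$ replaced by $S_{i1}$. - If $n_i=2$: $T_i=(X_{i1}+X_{i2})/\sqrt2$ and $T_i^0=(X_{i1}-X_{i2})/\sqrt2$. Here $\Phi$ is the standard normal CDF and $G_{t,\nu}$ the CDF of the $t$-distribution with $\nu$ degrees of freedom. Then the pairs are pairwise exchangeable under the null: for every $i\in\mathcal{H}_0$, $$(T_i,T_i^0\mid \mathbf{T}_{-i},\mathbf{T}^0_{-i})\stackrel{d}{=}(T_i^0,T_i\mid \mathbf{T}_{-i},\mathbf{T}^0_{-i}),$$ where $\mathbf{T}_{-i}=(T_1,\dots,T_{i-1},T_{i+1},\dots,T_m)$ and $\mathbf{T}^0_{-i}=(T^0_1,\dots,T^0_{i-1},T^0_{i+1},\dots,T^0_m)$.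
   Context: $\stackrel{d}{=}$ denotes equality of (conditional) distributions. The random partitions are drawn independently of the data. *)

theory Defs
  imports "HOL-Probability.Probability"
begin

definition Phi :: "real \<Rightarrow> real" where
  "Phi x = cdf (density lborel std_normal_density) x"

definition Phi_inv :: "real \<Rightarrow> real" where
  "Phi_inv p = (THE x. Phi x = p)"

definition t_density :: "real \<Rightarrow> real \<Rightarrow> real" where
  "t_density \<nu> x = Gamma ((\<nu> + 1) / 2) / (sqrt (\<nu> * pi) * Gamma (\<nu> / 2))
      * (1 + x\<^sup>2 / \<nu>) powr (- (\<nu> + 1) / 2)"

definition G_t :: "nat \<Rightarrow> real \<Rightarrow> real" where
  "G_t \<nu> x = cdf (density lborel (t_density (real \<nu>))) x"

definition xbar :: "(nat \<Rightarrow> real) \<Rightarrow> nat set \<Rightarrow> real" where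
  "xbar x A = (\<Sum>j\<in>A. x j) / real (card A)"

definition svar :: "(nat \<Rightarrow> real) \<Rightarrow> nat set \<Rightarrow> real" where
  "svar x A = (\<Sum>j\<in>A. (x j - xbar x A)\<^sup>2) / (real (card A) - 1)"

(* (T_i, T_i^0) computed from the n_i observations x (indexed 0..nn-1) and
   the first part A = N_{i1} of the partition (N_{i2} = {0..nn-1} - A). *)
definition T_stat :: "nat \<Rightarrow> nat set \<Rightarrow> (nat \<Rightarrow> real) \<Rightarrow> real \<times> real" where
  "T_stat nn A x =
    (if nn = 2 then ((x 0 + x 1) / sqrt 2, (x 0 - x 1) / sqrt 2)
     else
      (let B = {..<nn} - A;
           n1 = real (card A); n2 = real (card B);
           V = xbar x A + xbar x B;
           V0 = xbar x A - xbar x B;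
           S = (if nn \<ge> 4
                then sqrt (real nn / (n1 * n2) *
                       (((n1 - 1) * svar x A + (n2 - 1) * svar x B) / (real nn - 2)))
                else sqrt (svar x A))
       in (Phi_inv (G_t (nn - 2) (V / S)), Phi_inv (G_t (nn - 2) (V0 / S)))))"

definition TT :: "(nat \<Rightarrow> nat) \<Rightarrow> (nat \<Rightarrow> 'a \<Rightarrow> nat set) \<Rightarrow> (nat \<Rightarrow> nat \<Rightarrow> 'a \<Rightarrow> real)
                   \<Rightarrow> nat \<Rightarrow> 'a \<Rightarrow> real \<times> real" where
  "TT n N1 X k \<omega> = T_stat (n k) (N1 k \<omega>) (\<lambda>j. X k j \<omega>)"

definition others_space :: "nat \<Rightarrow> (nat \<Rightarrow> nat) \<Rightarrow> nat \<Rightarrow> (nat \<Rightarrow> nat \<Rightarrow> real) measure" where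
  "others_space m n i = PiM ({..<m} - {i}) (\<lambda>k. PiM {..<n k} (\<lambda>_. borel))"

definition others_data :: "nat \<Rightarrow> (nat \<Rightarrow> nat) \<Rightarrow> (nat \<Rightarrow> nat \<Rightarrow> 'a \<Rightarrow> real) \<Rightarrow> nat
                          \<Rightarrow> 'a \<Rightarrow> nat \<Rightarrow> nat \<Rightarrow> real" where
  "others_data m n X i \<omega> = (\<lambda>k\<in>{..<m} - {i}. \<lambda>j\<in>{..<n k}. X k j \<omega>)"

definition cond_alg :: "'a measure \<Rightarrow> nat \<Rightarrow> (nat \<Rightarrow> nat) \<Rightarrow> (nat \<Rightarrow> 'a \<Rightarrow> nat set)
                        \<Rightarrow> (nat \<Rightarrow> nat \<Rightarrow> 'a \<Rightarrow> real) \<Rightarrow> nat \<Rightarrow> 'a measure" where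
  "cond_alg M m n N1 X i =
     vimage_algebra (space M) (\<lambda>\<omega>. \<lambda>k\<in>{..<m} - {i}. TT n N1 X k \<omega>)
       (PiM ({..<m} - {i}) (\<lambda>_. (borel :: (real \<times> real) measure)))"

end

theory Submission
  imports Defs
begin

lemma Phi_rd: "real_distribution (density lborel std_normal_density)"
  unfolding real_distribution_def real_distribution_axioms_def
  using prob_space_normal_density by auto

lemma Phi_point0: "measure (density lborel std_normal_density) {x} = 0"
proof -
  have "emeasure (density lborel std_normal_density) {x} = 0"
    by (subst emeasure_density) (auto intro!: nn_integral_null_set)
  then show ?thesis by (simp add: measure_def)
qed

lemma Phi_cont: "isCont Phi x"
proof -
  interpret real_distribution "density lborel std_normal_density" by (rule Phi_rd)
  show ?thesis unfolding Phi_def[abs_def] using isCont_cdf Phi_point0 by simp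
qed

lemma Phi_strict: assumes "x < y" shows "Phi x < Phi y"
proof -
  interpret real_distribution "density lborel std_normal_density" by (rule Phi_rd)
  have "Phi y - Phi x = measure (density lborel std_normal_density) {x<..y}"
    unfolding Phi_def using cdf_diff_eq[OF assms] by simp
  moreover have "measure (density lborel std_normal_density) {x<..y} \<noteq> 0"
  proof
    assume "measure (density lborel std_normal_density) {x<..y} = 0"
    then have "emeasure (density lborel std_normal_density) {x<..y} = 0"
      by (simp add: emeasure_eq_measure)
    then have "{x<..y} \<in> null_sets (density lborel std_normal_density)"
      by (auto simp: null_sets_def)
    then have "AE z in lborel. z \<in> {x<..y} \<longrightarrow> std_normal_density z = 0"
      by (subst (asm) null_sets_density_iff) auto
    moreover have pos: "\<And>z. std_normal_density z > 0" using normal_density_pos[of 1 0] by simp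
    ultimately have "AE z in lborel. z \<notin> {x<..y}"
    proof (elim eventually_mono)
      fix z assume "\<And>z. std_normal_density z > 0" "z \<in> {x<..y} \<longrightarrow> std_normal_density z = 0"
      then show "z \<notin> {x<..y}" by (metis less_irrefl)
    qed
    then have "{x<..y} \<in> null_sets lborel"
        by (intro AE_iff_null_sets[THEN iffD2]) auto
    then show False using assms by (auto simp: null_sets_def)
  qed
  moreover have "measure (density lborel std_normal_density) {x<..y} \<ge> 0" by simp
  ultimately show ?thesis by linarith
qed

lemma Phi_inj: "inj Phi"
  by (metis Phi_strict linorder_inj_onI' order_less_imp_not_eq)

lemma Phi_inv_Phi: "Phi_inv (Phi x) = x"
  unfolding Phi_inv_def using Phi_inj by (auto intro!: the_equality dest: injD)

lemma Phi_inv_out: "p \<notin> range Phi \<Longrightarrow> Phi_inv p = The (\<lambda>x. False)"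
  unfolding Phi_inv_def by (metis rangeI)

lemma Phi_range_interval: "is_interval (range Phi)"
proof -
  have "connected (range Phi)"
    by (rule connected_continuous_image) (auto intro!: continuous_at_imp_continuous_on Phi_cont)
  then show ?thesis using is_interval_connected_1 by blast
qed

lemma Phi_inv_measurable[measurable]: "Phi_inv \<in> borel_measurable borel"
proof (rule borel_measurable_piecewise_mono[of "{range Phi, - range Phi}"])
  show "c \<in> sets borel" if "c \<in> {range Phi, - range Phi}" for c
    using that real_interval_borel_measurable[OF Phi_range_interval] by auto
  show "mono_on c Phi_inv" if "c \<in> {range Phi, - range Phi}" for c
  proof -
    have "mono_on (range Phi) Phi_inv"
      by (auto intro!: mono_onI simp: Phi_inv_Phi) (metis Phi_strict not_le)
    moreover have "mono_on (- range Phi) Phi_inv"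
      by (auto intro!: mono_onI simp: Phi_inv_out)
    ultimately show ?thesis using that by auto
  qed
qed auto

lemma G_t_measurable[measurable]: "G_t \<nu> \<in> borel_measurable borel"
proof -
  have tm: "t_density r \<in> borel_measurable borel" for r
    unfolding t_density_def by measurable
  note tm[measurable]
  have "G_t \<nu> = (\<lambda>x. enn2real (\<integral>\<^sup>+ z. ennreal (t_density (real \<nu>) z) * (if z \<le> x then 1 else 0) \<partial>lborel))"
    unfolding G_t_def[abs_def] cdf_def measure_def
    by (subst emeasure_density) (auto intro!: tm simp: indicator_def of_bool_def)
  also have "\<dots> \<in> borel_measurable borel"
    apply (intro measurable_compose[OF _ borel_measurable_enn2real])
    apply (rule lborel.borel_measurable_nn_integral)
    by measurable
  finally show ?thesis .
qed

lemma T_stat_cong: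
  assumes "\<And>j. j < nn \<Longrightarrow> x j = y j" "A \<subseteq> {..<nn}"
  shows "T_stat nn A x = T_stat nn A y"
proof -
  have s1: "sum x A = sum y A" "sum x ({..<nn} - A) = sum y ({..<nn} - A)"
    using assms by (auto intro!: sum.cong)
  have "xbar x A = xbar y A" "xbar x ({..<nn} - A) = xbar y ({..<nn} - A)"
    unfolding xbar_def using s1 by auto
  moreover have "svar x A = svar y A" "svar x ({..<nn} - A) = svar y ({..<nn} - A)"
    unfolding svar_def using assms calculation by (auto intro!: sum.cong arg_cong2[where f="(/)"])
  moreover have "nn = 2 \<Longrightarrow> x 0 = y 0 \<and> x 1 = y 1" using assms by auto
  ultimately show ?thesis unfolding T_stat_def Let_def by simp
qed

definition flipv :: "nat set \<Rightarrow> (nat \<Rightarrow> real) \<Rightarrow> nat \<Rightarrow> real" where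
  "flipv b x = (\<lambda>j. if j \<in> b then - x j else x j)"

definition bset :: "nat \<Rightarrow> nat set \<Rightarrow> nat set" where
  "bset nn A = (if nn = 2 then {1} else {..<nn} - A)"

lemma T_stat_flip:
  assumes "A \<subseteq> {..<nn}"
  shows "T_stat nn A (flipv (bset nn A) x) = prod.swap (T_stat nn A x)"
proof (cases "nn = 2")
  case True
  then show ?thesis unfolding T_stat_def flipv_def bset_def by (simp add: diff_divide_distrib add_divide_distrib)
next
  case False
  let ?B = "{..<nn} - A"
  let ?y = "flipv (bset nn A) x"
  have fA: "finite A" using assms finite_subset by blast
  have yA: "j \<in> A \<Longrightarrow> ?y j = x j" for j using False unfolding flipv_def bset_def by auto
  have yB: "j \<in> ?B \<Longrightarrow> ?y j = - x j" for j using False unfolding flipv_def bset_def by auto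
  have xa: "xbar ?y A = xbar x A" unfolding xbar_def using yA by (simp cong: sum.cong)
  have "sum ?y ?B = sum (\<lambda>j. - x j) ?B" by (rule sum.cong) (auto simp: yB)
  then have xb: "xbar ?y ?B = - xbar x ?B" unfolding xbar_def by (simp add: sum_negf)
  have sa: "svar ?y A = svar x A" unfolding svar_def using yA xa by (simp cong: sum.cong)
  have sb: "svar ?y ?B = svar x ?B"
  proof -
    have "(\<Sum>j\<in>?B. (?y j - xbar ?y ?B)\<^sup>2) = (\<Sum>j\<in>?B. (x j - xbar x ?B)\<^sup>2)"
      using yB xb by (intro sum.cong) (auto simp: power2_commute)
    then show ?thesis unfolding svar_def by simp
  qed
  show ?thesis using False unfolding T_stat_def Let_def by (simp add: xa xb sa sb)
qed

lemma T_stat_meas: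
  assumes [measurable]: "\<And>j. x j \<in> borel_measurable N"
  shows "(\<lambda>\<omega>. T_stat nn A (\<lambda>j. x j \<omega>)) \<in> borel_measurable N"
  unfolding T_stat_def Let_def xbar_def svar_def by measurable


definition flipR :: "nat \<Rightarrow> nat set \<Rightarrow> (nat \<Rightarrow> real) \<Rightarrow> nat \<Rightarrow> real" where
  "flipR nn b z = (\<lambda>j\<in>{..<nn}. if j \<in> b then - z j else z j)"

lemma flipR_meas[measurable]:
  "flipR nn b \<in> measurable (PiM {..<nn} (\<lambda>_. lborel)) (PiM {..<nn} (\<lambda>_. lborel))"
  unfolding flipR_def by measurable

lemma flipR_meas_borel[measurable]:
  "flipR nn b \<in> measurable (PiM {..<nn} (\<lambda>_. borel)) (PiM {..<nn} (\<lambda>_. borel))"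
  unfolding flipR_def by measurable

lemma lborel_uminus_preimage: "A \<in> sets borel \<Longrightarrow> emeasure lborel (uminus -` (A::real set)) = emeasure lborel A"
proof -
  assume A: "A \<in> sets borel"
  have "emeasure (distr lborel borel uminus) A = emeasure lborel A" by (simp add: lborel_distr_uminus)
  then show ?thesis using A by (subst (asm) emeasure_distr) auto
qed

lemma distr_flipR: "distr (PiM {..<nn} (\<lambda>_. lborel)) (PiM {..<nn} (\<lambda>_. lborel)) (flipR nn b)
   = PiM {..<nn} (\<lambda>_. lborel)"
proof -
  interpret product_sigma_finite "\<lambda>_. lborel" by standard
  show ?thesis
  proof (rule PiM_eqI)
    fix A :: "nat \<Rightarrow> real set" assume A: "\<And>j. j \<in> {..<nn} \<Longrightarrow> A j \<in> sets lborel"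
    let ?A' = "\<lambda>j. if j \<in> b then uminus -` A j else A j"
    have A'[measurable]: "j \<in> {..<nn} \<Longrightarrow> ?A' j \<in> sets lborel" for j
      using A[of j] by (auto simp: measurable_sets_borel[OF borel_measurable_uminus[OF measurable_ident_sets[OF refl]]])
    have "flipR nn b -` Pi\<^sub>E {..<nn} A \<inter> space (PiM {..<nn} (\<lambda>_. lborel)) = Pi\<^sub>E {..<nn} ?A'"
      unfolding flipR_def by (auto simp: space_PiM PiE_iff split: if_splits)
    moreover have "Pi\<^sub>E {..<nn} A \<in> sets (PiM {..<nn} (\<lambda>_. lborel))"
      using A by (intro sets_PiM_I_finite) auto
    ultimately have "emeasure (distr (PiM {..<nn} (\<lambda>_. lborel)) (PiM {..<nn} (\<lambda>_. lborel)) (flipR nn b)) (Pi\<^sub>E {..<nn} A)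
       = emeasure (PiM {..<nn} (\<lambda>_. lborel)) (Pi\<^sub>E {..<nn} ?A')"
      by (subst emeasure_distr) auto
    also have "\<dots> = (\<Prod>j\<in>{..<nn}. emeasure lborel (?A' j))"
      using A' by (subst emeasure_PiM) auto
    also have "\<dots> = (\<Prod>j\<in>{..<nn}. emeasure lborel (A j))"
      using A by (intro prod.cong) (auto simp: lborel_uminus_preimage)
    finally show "emeasure (distr (PiM {..<nn} (\<lambda>_. lborel)) (PiM {..<nn} (\<lambda>_. lborel)) (flipR nn b)) (Pi\<^sub>E {..<nn} A)
       = (\<Prod>j\<in>{..<nn}. emeasure lborel (A j))" .
  qed auto
qed

lemma nn_integral_flipR:
  assumes "g \<in> borel_measurable (PiM {..<nn} (\<lambda>_. lborel))"
  shows "(\<integral>\<^sup>+ z. g (flipR nn b z) \<partial>PiM {..<nn} (\<lambda>_. lborel)) = (\<integral>\<^sup>+ z. g z \<partial>PiM {..<nn} (\<lambda>_. lborel))"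
proof -
  have "(\<integral>\<^sup>+ z. g z \<partial>PiM {..<nn} (\<lambda>_. lborel)) =
        (\<integral>\<^sup>+ z. g z \<partial>distr (PiM {..<nn} (\<lambda>_. lborel)) (PiM {..<nn} (\<lambda>_. lborel)) (flipR nn b))"
    by (simp add: distr_flipR)
  also have "\<dots> = (\<integral>\<^sup>+ z. g (flipR nn b z) \<partial>PiM {..<nn} (\<lambda>_. lborel))"
    using assms by (subst nn_integral_distr) auto
  finally show ?thesis by simp
qed

lemma inner_flip:
  fixes h :: "real \<Rightarrow> real"
  assumes hm: "h \<in> borel_measurable borel" and hs: "\<And>x. h (- x) = h x"
    and B: "B \<in> sets (PiM {..<nn} (\<lambda>_. borel))"
  shows "(\<integral>\<^sup>+ e. indicator {z \<in> space (PiM {..<nn} (\<lambda>_. borel)). flipR nn b z \<in> B} e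
             * (\<Prod>j<nn. ennreal (h (e j))) \<partial>PiM {..<nn} (\<lambda>_. lborel))
       = (\<integral>\<^sup>+ e. indicator B e * (\<Prod>j<nn. ennreal (h (e j))) \<partial>PiM {..<nn} (\<lambda>_. lborel))"
proof -
  have B': "B \<in> sets (PiM {..<nn} (\<lambda>_. lborel))" using B
    by (metis (no_types, lifting) sets_PiM_cong sets_lborel)
  have gm: "(\<lambda>e. indicator B e * (\<Prod>j<nn. ennreal (h (e j)))) \<in> borel_measurable (PiM {..<nn} (\<lambda>_. lborel))"
    using B' hm by measurable
  have "(\<integral>\<^sup>+ e. indicator {z \<in> space (PiM {..<nn} (\<lambda>_. borel)). flipR nn b z \<in> B} e
             * (\<Prod>j<nn. ennreal (h (e j))) \<partial>PiM {..<nn} (\<lambda>_. lborel))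
      = (\<integral>\<^sup>+ e. indicator B (flipR nn b e) * (\<Prod>j<nn. ennreal (h (flipR nn b e j))) \<partial>PiM {..<nn} (\<lambda>_. lborel))"
    by (intro nn_integral_cong) (auto simp: indicator_def flipR_def hs space_PiM intro!: prod.cong)
  also have "\<dots> = (\<integral>\<^sup>+ e. indicator B e * (\<Prod>j<nn. ennreal (h (e j))) \<partial>PiM {..<nn} (\<lambda>_. lborel))"
    using nn_integral_flipR[OF gm, of b] by simp
  finally show ?thesis .
qed


lemma T_stat_meas2:
  assumes "A \<subseteq> {..<nn}" "\<And>j. j < nn \<Longrightarrow> x j \<in> borel_measurable N"
  shows "(\<lambda>\<omega>. T_stat nn A (\<lambda>j. x j \<omega>)) \<in> borel_measurable N"
proof -
  have "(\<lambda>\<omega>. T_stat nn A (\<lambda>j. x j \<omega>)) = (\<lambda>\<omega>. T_stat nn A (\<lambda>j. if j < nn then x j \<omega> else 0))"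
    using assms(1) by (intro ext T_stat_cong) auto
  also have "\<dots> \<in> borel_measurable N"
  proof (rule T_stat_meas)
    fix j show "(\<lambda>\<omega>. if j < nn then x j \<omega> else 0) \<in> borel_measurable N"
      using assms(2)[of j] by (cases "j < nn") auto
  qed
  finally show ?thesis .
qed

context
  fixes M :: "'a measure" and m :: nat and n :: "nat \<Rightarrow> nat" and \<mu> :: "nat \<Rightarrow> real"
    and X :: "nat \<Rightarrow> nat \<Rightarrow> 'a \<Rightarrow> real" and N1 :: "nat \<Rightarrow> 'a \<Rightarrow> nat set" and i :: nat
  assumes PS: "prob_space M"
    and Xm: "\<forall>k<m. \<forall>j<n k. X k j \<in> borel_measurable M"
    and Nsub: "\<forall>k<m. \<forall>\<omega>\<in>space M. N1 k \<omega> \<subseteq> {..<n k} \<and> card (N1 k \<omega>) = (n k + 1) div 2"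
    and Nm: "(\<lambda>\<omega>. \<lambda>k\<in>{..<m}. N1 k \<omega>) \<in> M \<rightarrow>\<^sub>M PiM {..<m} (\<lambda>_. count_space UNIV)"
    and im: "i < m"
begin

interpretation prob_space M by (rule PS)

lemma N1_meas: assumes "k < m"
  shows "N1 k \<in> measurable M (count_space (Pow {..<n k}))"
proof -
  have m1: "(\<lambda>\<omega>. (\<lambda>k\<in>{..<m}. N1 k \<omega>) k) \<in> measurable M (count_space UNIV)"
    by (rule measurable_compose[OF Nm measurable_component_singleton]) (use assms in auto)
  then have m2: "N1 k \<in> measurable M (count_space UNIV)"
    using assms by (simp add: restrict_def)
  show ?thesis
  proof (subst measurable_count_space_eq_countable)
    show "countable (Pow {..<n k})" by (simp add: countable_finite)
    show "N1 k \<in> space M \<rightarrow> Pow {..<n k} \<and> (\<forall>a\<in>Pow {..<n k}. N1 k -` {a} \<inter> space M \<in> sets M)"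
      using Nsub assms measurable_sets[OF m2, of "{a}" for a] by auto
  qed
qed

lemma TT_meas: assumes "k < m" shows "TT n N1 X k \<in> borel_measurable M"
proof -
  have "(\<lambda>\<omega>. T_stat (n k) (N1 k \<omega>) (\<lambda>j. X k j \<omega>)) \<in> borel_measurable M"
  proof (rule measurable_compose_countable'[OF _ N1_meas[OF assms]])
    fix a assume "a \<in> Pow {..<n k}"
    then show "(\<lambda>\<omega>. T_stat (n k) a (\<lambda>j. X k j \<omega>)) \<in> borel_measurable M"
      by (intro T_stat_meas2) (use Xm assms in auto)
  qed (simp add: countable_finite)
  then show ?thesis unfolding TT_def[abs_def] .
qed

lemma Tm_meas: "(\<lambda>\<omega>. \<lambda>k\<in>{..<m} - {i}. TT n N1 X k \<omega>) \<in> measurable M (PiM ({..<m} - {i}) (\<lambda>_. borel))"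
  by (rule measurable_restrict) (auto intro: TT_meas)

lemma W_meas: "(\<lambda>\<omega>. \<lambda>k\<in>{..<m}. \<lambda>j\<in>{..<n k}. X k j \<omega>) \<in> measurable M (PiM {..<m} (\<lambda>k. PiM {..<n k} (\<lambda>_. borel)))"
  by (intro measurable_restrict) (use Xm in auto)

lemma Y_meas: "others_data m n X i \<in> measurable M (others_space m n i)"
  unfolding others_data_def[abs_def] others_space_def
  by (intro measurable_restrict) (use Xm in auto)

lemma Z_meas: "(\<lambda>\<omega>. \<lambda>j\<in>{..<n i}. X i j \<omega>) \<in> measurable M (PiM {..<n i} (\<lambda>_. borel))"
  by (intro measurable_restrict) (use Xm im in auto)

end

lemma split_union:
  assumes "\<And>\<omega>. \<omega> \<in> S \<Longrightarrow> g \<omega> \<in> \<A> \<and> (P \<omega> \<longleftrightarrow> Q (g \<omega>) \<omega>)"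
  shows "{\<omega>\<in>S. P \<omega>} = (\<Union>a\<in>\<A>. {\<omega>\<in>S. g \<omega> = a \<and> Q a \<omega>})"
  using assms by auto

context
  fixes M :: "'a measure" and m :: nat and n :: "nat \<Rightarrow> nat" and \<mu> :: "nat \<Rightarrow> real"
    and X :: "nat \<Rightarrow> nat \<Rightarrow> 'a \<Rightarrow> real" and N1 :: "nat \<Rightarrow> 'a \<Rightarrow> nat set" and i :: nat
  assumes PS: "prob_space M"
    and Xm: "\<forall>k<m. \<forall>j<n k. X k j \<in> borel_measurable M"
    and Nsub: "\<forall>k<m. \<forall>\<omega>\<in>space M. N1 k \<omega> \<subseteq> {..<n k} \<and> card (N1 k \<omega>) = (n k + 1) div 2"
    and Nm: "(\<lambda>\<omega>. \<lambda>k\<in>{..<m}. N1 k \<omega>) \<in> M \<rightarrow>\<^sub>M PiM {..<m} (\<lambda>_. count_space UNIV)"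
    and IND: "\<forall>A\<in>sets (PiM {..<m} (\<lambda>_. count_space UNIV)).
         \<forall>B\<in>sets (PiM {..<m} (\<lambda>k. PiM {..<n k} (\<lambda>_. borel))).
           measure M {\<omega>\<in>space M. (\<lambda>k\<in>{..<m}. N1 k \<omega>) \<in> A \<and>
                                   (\<lambda>k\<in>{..<m}. \<lambda>j\<in>{..<n k}. X k j \<omega>) \<in> B}
           = measure M {\<omega>\<in>space M. (\<lambda>k\<in>{..<m}. N1 k \<omega>) \<in> A} *
             measure M {\<omega>\<in>space M. (\<lambda>k\<in>{..<m}. \<lambda>j\<in>{..<n k}. X k j \<omega>) \<in> B}"
    and im: "i < m" and mu0: "\<mu> i = 0"
    and DENS: "\<exists>f :: (nat \<Rightarrow> nat \<Rightarrow> real) \<Rightarrow> real \<Rightarrow> real.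
           (\<lambda>(y, x). f y x) \<in> borel_measurable (others_space m n i \<Otimes>\<^sub>M borel) \<and>
           (\<forall>y x. f y x \<ge> 0) \<and>
           (\<forall>y\<in>space (others_space m n i). (\<integral>\<^sup>+ x. ennreal (f y x) \<partial>lborel) = 1) \<and>
           (\<forall>y x. f y (- x) = f y x) \<and>
           (\<forall>A\<in>sets (others_space m n i). \<forall>B\<in>sets (PiM {..<n i} (\<lambda>_. borel)).
              emeasure M {\<omega>\<in>space M. others_data m n X i \<omega> \<in> A \<and>
                                      (\<lambda>j\<in>{..<n i}. X i j \<omega> - \<mu> i) \<in> B}
              = (\<integral>\<^sup>+ \<omega>. indicator A (others_data m n X i \<omega>) *
                    (\<integral>\<^sup>+ e. indicator B e * (\<Prod>j<n i. ennreal (f (others_data m n X i \<omega>) (e j)))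
                       \<partial>PiM {..<n i} (\<lambda>_. lborel)) \<partial>M))"
begin

interpretation prob_space M by (rule PS)

abbreviation "Nv \<equiv> (\<lambda>\<omega>. \<lambda>k\<in>{..<m}. N1 k \<omega>)"
abbreviation "W \<equiv> (\<lambda>\<omega>. \<lambda>k\<in>{..<m}. \<lambda>j\<in>{..<n k}. X k j \<omega>)"
abbreviation "Y \<equiv> others_data m n X i"
abbreviation "Z \<equiv> (\<lambda>\<omega>. \<lambda>j\<in>{..<n i}. X i j \<omega>)"
abbreviation "Zsp \<equiv> PiM {..<n i} (\<lambda>_. (borel :: real measure))"
abbreviation "Ysp \<equiv> others_space m n i"

lemma Y_meas': "Y \<in> measurable M Ysp"
  using Y_meas[OF PS Xm Nsub Nm im] .
lemma Z_meas': "Z \<in> measurable M Zsp"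
  using Z_meas[OF PS Xm Nsub Nm im] .
lemma W_meas': "W \<in> measurable M (PiM {..<m} (\<lambda>k. PiM {..<n k} (\<lambda>_. borel)))"
  using W_meas[OF PS Xm Nsub Nm im] .

lemma key2:
  assumes a: "a \<in> PiE {..<m} (\<lambda>k. Pow {..<n k})" and D': "D' \<in> sets Ysp" and A': "A' \<in> sets Zsp"
  shows "measure M {\<omega>\<in>space M. Nv \<omega> = a \<and> Y \<omega> \<in> D' \<and> Z \<omega> \<in> A'}
       = measure M {\<omega>\<in>space M. Nv \<omega> = a \<and> Y \<omega> \<in> D' \<and> Z \<omega> \<in> {z\<in>space Zsp. flipR (n i) b z \<in> A'}}"
proof -
  have sing: "{a} \<in> sets (PiM {..<m} (\<lambda>_. count_space UNIV))"
  proof -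
    have "{a} = PiE {..<m} (\<lambda>k. {a k})" using a by (simp add: PiE_singleton PiE_iff)
    then show ?thesis by (auto intro!: sets_PiM_I_finite)
  qed
  have G: "measure M {\<omega>\<in>space M. Nv \<omega> = a \<and> Y \<omega> \<in> D' \<and> Z \<omega> \<in> A''}
     = measure M {\<omega>\<in>space M. Nv \<omega> \<in> {a}} * measure M {\<omega>\<in>space M. Y \<omega> \<in> D' \<and> Z \<omega> \<in> A''}"
    if A'': "A'' \<in> sets Zsp" for A''
  proof -
    let ?Wsp = "PiM {..<m} (\<lambda>k. PiM {..<n k} (\<lambda>_. (borel :: real measure)))"
    let ?Bw = "{w \<in> space ?Wsp. restrict w ({..<m} - {i}) \<in> D' \<and> w i \<in> A''}"
    have r1: "(\<lambda>w. restrict w ({..<m} - {i})) \<in> measurable ?Wsp Ysp"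
      unfolding others_space_def by (rule measurable_restrict_subset) auto
    have r2: "(\<lambda>w. w i) \<in> measurable ?Wsp Zsp"
      using measurable_component_singleton[of i "{..<m}" "\<lambda>k. PiM {..<n k} (\<lambda>_. borel)"] im by simp
    have "?Bw = ((\<lambda>w. restrict w ({..<m} - {i})) -` D' \<inter> space ?Wsp) \<inter> ((\<lambda>w. w i) -` A'' \<inter> space ?Wsp)"
      by auto
    also have "\<dots> \<in> sets ?Wsp"
      using measurable_sets[OF r1 D'] measurable_sets[OF r2 A''] by auto
    finally have Bw: "?Bw \<in> sets ?Wsp" .
    have eq: "{\<omega>\<in>space M. W \<omega> \<in> ?Bw} = {\<omega>\<in>space M. Y \<omega> \<in> D' \<and> Z \<omega> \<in> A''}"
    proof -
      have "\<omega> \<in> space M \<Longrightarrow> W \<omega> \<in> space ?Wsp" for \<omega> using measurable_space[OF W_meas'] by auto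
      moreover have "restrict (W \<omega>) ({..<m} - {i}) = Y \<omega>" for \<omega>
        unfolding others_data_def by (auto simp: restrict_def fun_eq_iff)
      moreover have "W \<omega> i = Z \<omega>" for \<omega> using im by simp
      ultimately show ?thesis by auto
    qed
    have eq2: "{\<omega>\<in>space M. Nv \<omega> \<in> {a} \<and> W \<omega> \<in> ?Bw} = {\<omega>\<in>space M. Nv \<omega> = a \<and> Y \<omega> \<in> D' \<and> Z \<omega> \<in> A''}"
      using eq by blast
    show ?thesis using IND[rule_format, OF sing Bw] unfolding eq eq2 .
  qed
  obtain f :: "(nat \<Rightarrow> nat \<Rightarrow> real) \<Rightarrow> real \<Rightarrow> real" where
    fm: "(\<lambda>(y, x). f y x) \<in> borel_measurable (Ysp \<Otimes>\<^sub>M borel)" and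
    fs: "\<forall>y x. f y (- x) = f y x" and
    fd0: "\<forall>A\<in>sets Ysp. \<forall>B\<in>sets Zsp.
              emeasure M {\<omega>\<in>space M. Y \<omega> \<in> A \<and> (\<lambda>j\<in>{..<n i}. X i j \<omega> - \<mu> i) \<in> B}
              = (\<integral>\<^sup>+ \<omega>. indicator A (Y \<omega>) *
                    (\<integral>\<^sup>+ e. indicator B e * (\<Prod>j<n i. ennreal (f (Y \<omega>) (e j)))
                       \<partial>PiM {..<n i} (\<lambda>_. lborel)) \<partial>M)"
    using DENS by blast
  have fd: "emeasure M {\<omega>\<in>space M. Y \<omega> \<in> A \<and> Z \<omega> \<in> B}
              = (\<integral>\<^sup>+ \<omega>. indicator A (Y \<omega>) *
                    (\<integral>\<^sup>+ e. indicator B e * (\<Prod>j<n i. ennreal (f (Y \<omega>) (e j)))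
                       \<partial>PiM {..<n i} (\<lambda>_. lborel)) \<partial>M)"
    if "A \<in> sets Ysp" "B \<in> sets Zsp" for A B
    using fd0 that mu0 by simp
  let ?F = "{z\<in>space Zsp. flipR (n i) b z \<in> A'}"
  have F: "?F \<in> sets Zsp"
  proof -
    have "?F = flipR (n i) b -` A' \<inter> space Zsp" by auto
    also have "\<dots> \<in> sets Zsp" by (rule measurable_sets[OF flipR_meas_borel A'])
    finally show ?thesis .
  qed
  have "emeasure M {\<omega>\<in>space M. Y \<omega> \<in> D' \<and> Z \<omega> \<in> ?F}
      = (\<integral>\<^sup>+ \<omega>. indicator D' (Y \<omega>) *
                    (\<integral>\<^sup>+ e. indicator A' e * (\<Prod>j<n i. ennreal (f (Y \<omega>) (e j)))
                       \<partial>PiM {..<n i} (\<lambda>_. lborel)) \<partial>M)"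
    unfolding fd[OF D' F]
  proof (rule nn_integral_cong)
    fix \<omega> assume "\<omega> \<in> space M"
    then have ysp: "Y \<omega> \<in> space Ysp" using measurable_space[OF Y_meas'] by auto
    have hm: "f (Y \<omega>) \<in> borel_measurable borel"
      using measurable_Pair2[OF fm ysp] by simp
    have "(\<integral>\<^sup>+ e. indicator ?F e * (\<Prod>j<n i. ennreal (f (Y \<omega>) (e j))) \<partial>PiM {..<n i} (\<lambda>_. lborel))
        = (\<integral>\<^sup>+ e. indicator A' e * (\<Prod>j<n i. ennreal (f (Y \<omega>) (e j))) \<partial>PiM {..<n i} (\<lambda>_. lborel))"
      by (rule inner_flip[OF hm _ A']) (use fs in auto)
    then show "indicator D' (Y \<omega>) * (\<integral>\<^sup>+ e. indicator ?F e * (\<Prod>j<n i. ennreal (f (Y \<omega>) (e j))) \<partial>PiM {..<n i} (\<lambda>_. lborel))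
        = indicator D' (Y \<omega>) * (\<integral>\<^sup>+ e. indicator A' e * (\<Prod>j<n i. ennreal (f (Y \<omega>) (e j))) \<partial>PiM {..<n i} (\<lambda>_. lborel))"
      by simp
  qed
  also have "\<dots> = emeasure M {\<omega>\<in>space M. Y \<omega> \<in> D' \<and> Z \<omega> \<in> A'}"
    by (rule fd[OF D' A', symmetric])
  finally have "measure M {\<omega>\<in>space M. Y \<omega> \<in> D' \<and> Z \<omega> \<in> ?F} = measure M {\<omega>\<in>space M. Y \<omega> \<in> D' \<and> Z \<omega> \<in> A'}"
    by (simp add: measure_def)
  then show ?thesis using G[OF A'] G[OF F] by simp
qed


lemma Nv_in: "\<omega> \<in> space M \<Longrightarrow> Nv \<omega> \<in> PiE {..<m} (\<lambda>k. Pow {..<n k})"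
  using Nsub by auto

lemma TT_eq: "\<omega> \<in> space M \<Longrightarrow> k < m \<Longrightarrow> TT n N1 X k \<omega> = T_stat (n k) (N1 k \<omega>) (\<lambda>j\<in>{..<n k}. X k j \<omega>)"
  unfolding TT_def by (rule T_stat_cong) (use Nsub in auto)

lemma Tm_eq: "\<omega> \<in> space M \<Longrightarrow>
   (\<lambda>k\<in>{..<m}-{i}. TT n N1 X k \<omega>) = (\<lambda>k\<in>{..<m}-{i}. T_stat (n k) (Nv \<omega> k) (Y \<omega> k))"
  by (auto simp: TT_eq others_data_def fun_eq_iff)

lemma Ti_eq: "\<omega> \<in> space M \<Longrightarrow> TT n N1 X i \<omega> = T_stat (n i) (Nv \<omega> i) (Z \<omega>)"
  using TT_eq[of \<omega> i] im by simp

lemma Tis_eq: "\<omega> \<in> space M \<Longrightarrow>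
   prod.swap (TT n N1 X i \<omega>) = T_stat (n i) (Nv \<omega> i) (flipR (n i) (bset (n i) (Nv \<omega> i)) (Z \<omega>))"
proof -
  assume w: "\<omega> \<in> space M"
  have sub: "Nv \<omega> i \<subseteq> {..<n i}" using Nsub w im by auto
  have "prod.swap (TT n N1 X i \<omega>) = T_stat (n i) (Nv \<omega> i) (flipv (bset (n i) (Nv \<omega> i)) (Z \<omega>))"
    using Ti_eq[OF w] T_stat_flip[OF sub] by simp
  also have "\<dots> = T_stat (n i) (Nv \<omega> i) (flipR (n i) (bset (n i) (Nv \<omega> i)) (Z \<omega>))"
    by (rule T_stat_cong[OF _ sub]) (simp add: flipv_def flipR_def)
  finally show ?thesis .
qed

lemma key:
  assumes D: "D \<in> sets (PiM ({..<m}-{i}) (\<lambda>_. (borel :: (real \<times> real) measure)))"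
    and A: "A \<in> sets (borel :: (real \<times> real) measure)"
  shows "measure M {\<omega>\<in>space M. (\<lambda>k\<in>{..<m}-{i}. TT n N1 X k \<omega>) \<in> D \<and> TT n N1 X i \<omega> \<in> A}
       = measure M {\<omega>\<in>space M. (\<lambda>k\<in>{..<m}-{i}. TT n N1 X k \<omega>) \<in> D \<and> prod.swap (TT n N1 X i \<omega>) \<in> A}"
proof -
  define AA where "AA = PiE {..<m} (\<lambda>k. Pow {..<n k})"
  define Da where "Da a = {y \<in> space Ysp. (\<lambda>k\<in>{..<m}-{i}. T_stat (n k) (a k) (y k)) \<in> D}" for a
  define Aa where "Aa a = {z \<in> space Zsp. T_stat (n i) (a i) z \<in> A}" for a
  define Fa where "Fa a = {z \<in> space Zsp. flipR (n i) (bset (n i) (a i)) z \<in> Aa a}" for a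
  define E1 where "E1 a = {\<omega>\<in>space M. Nv \<omega> = a \<and> Y \<omega> \<in> Da a \<and> Z \<omega> \<in> Aa a}" for a
  define E2 where "E2 a = {\<omega>\<in>space M. Nv \<omega> = a \<and> Y \<omega> \<in> Da a \<and> Z \<omega> \<in> Fa a}" for a
  have fin: "finite AA" unfolding AA_def by (auto intro!: finite_PiE)
  have Dam: "Da a \<in> sets Ysp" if a: "a \<in> AA" for a
  proof -
    have "(\<lambda>y. \<lambda>k\<in>{..<m}-{i}. T_stat (n k) (a k) (y k)) \<in> measurable Ysp (PiM ({..<m}-{i}) (\<lambda>_. borel))"
    proof (rule measurable_restrict)
      fix k assume k: "k \<in> {..<m}-{i}"
      show "(\<lambda>y. T_stat (n k) (a k) (y k)) \<in> borel_measurable Ysp"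
      proof (rule T_stat_meas2[where x="\<lambda>j y. y k j", simplified])
        show "a k \<subseteq> {..<n k}" using a k unfolding AA_def by auto
        fix j assume j: "j < n k"
        have c1: "(\<lambda>y. y k) \<in> measurable Ysp (PiM {..<n k} (\<lambda>_. borel))"
          unfolding others_space_def
          using measurable_component_singleton[of k "{..<m}-{i}" "\<lambda>k. PiM {..<n k} (\<lambda>_. borel)"] k by simp
        have c2: "(\<lambda>v. v j) \<in> measurable (PiM {..<n k} (\<lambda>_. borel)) (borel :: real measure)"
          using measurable_component_singleton[of j "{..<n k}" "\<lambda>_. borel"] j by simp
        from measurable_compose[OF c1 c2] show "(\<lambda>y. y k j) \<in> borel_measurable Ysp" by simp
      qed
    qed
    from measurable_sets[OF this D] show ?thesis unfolding Da_def by (simp add: vimage_def Int_def conj_commute)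
  qed
  have Aam: "Aa a \<in> sets Zsp" if a: "a \<in> AA" for a
  proof -
    have "(\<lambda>z. T_stat (n i) (a i) z) \<in> borel_measurable Zsp"
    proof (rule T_stat_meas2[where x="\<lambda>j z. z j", simplified])
      show "a i \<subseteq> {..<n i}" using a im unfolding AA_def by auto
    qed auto
    from measurable_sets[OF this A] show ?thesis unfolding Aa_def by (simp add: vimage_def Int_def conj_commute)
  qed
  have Nvm: "{\<omega>\<in>space M. Nv \<omega> = a} \<in> sets M" if a: "a \<in> AA" for a
  proof -
    have "{a} = PiE {..<m} (\<lambda>k. {a k})" using a unfolding AA_def by (simp add: PiE_singleton PiE_iff)
    then have "{a} \<in> sets (PiM {..<m} (\<lambda>_. count_space UNIV))" by (auto intro!: sets_PiM_I_finite)
    from measurable_sets[OF Nm this] show ?thesis by (simp add: vimage_def Int_def conj_commute)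
  qed
  have Ym: "{\<omega>\<in>space M. Y \<omega> \<in> S} \<in> sets M" if "S \<in> sets Ysp" for S
    using measurable_sets[OF Y_meas' that] by (simp add: vimage_def Int_def conj_commute)
  have Zm: "{\<omega>\<in>space M. Z \<omega> \<in> S} \<in> sets M" if "S \<in> sets Zsp" for S
    using measurable_sets[OF Z_meas' that] by (simp add: vimage_def Int_def conj_commute)
  have Fam: "Fa a \<in> sets Zsp" if a: "a \<in> AA" for a
  proof -
    have "Fa a = flipR (n i) (bset (n i) (a i)) -` Aa a \<inter> space Zsp" unfolding Fa_def by auto
    then show ?thesis using measurable_sets[OF flipR_meas_borel Aam[OF a]] by simp
  qed
  have E1m: "E1 a \<in> sets M" if "a \<in> AA" for a
  proof -
    have "E1 a = {\<omega>\<in>space M. Nv \<omega> = a} \<inter> {\<omega>\<in>space M. Y \<omega> \<in> Da a} \<inter> {\<omega>\<in>space M. Z \<omega> \<in> Aa a}"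
      unfolding E1_def by auto
    then show ?thesis using Nvm[OF that] Ym[OF Dam[OF that]] Zm[OF Aam[OF that]] by auto
  qed
  have E2m: "E2 a \<in> sets M" if "a \<in> AA" for a
  proof -
    have "E2 a = {\<omega>\<in>space M. Nv \<omega> = a} \<inter> {\<omega>\<in>space M. Y \<omega> \<in> Da a} \<inter> {\<omega>\<in>space M. Z \<omega> \<in> Fa a}"
      unfolding E2_def by auto
    then show ?thesis using Nvm[OF that] Ym[OF Dam[OF that]] Zm[OF Fam[OF that]] by auto
  qed
  have Ysp_in: "\<omega> \<in> space M \<Longrightarrow> Y \<omega> \<in> space Ysp" for \<omega> using measurable_space[OF Y_meas'] by auto
  have Zsp_in: "\<omega> \<in> space M \<Longrightarrow> Z \<omega> \<in> space Zsp" for \<omega> using measurable_space[OF Z_meas'] by auto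
  have Fsp_in: "flipR (n i) b z \<in> space Zsp" for b z
    unfolding flipR_def by (auto simp: space_PiM)
  have U1: "{\<omega>\<in>space M. (\<lambda>k\<in>{..<m}-{i}. TT n N1 X k \<omega>) \<in> D \<and> TT n N1 X i \<omega> \<in> A} = (\<Union>a\<in>AA. E1 a)"
    unfolding E1_def
  proof (rule split_union)
    fix \<omega> assume w: "\<omega> \<in> space M"
    show "Nv \<omega> \<in> AA \<and> ((\<lambda>k\<in>{..<m}-{i}. TT n N1 X k \<omega>) \<in> D \<and> TT n N1 X i \<omega> \<in> A
        \<longleftrightarrow> Y \<omega> \<in> Da (Nv \<omega>) \<and> Z \<omega> \<in> Aa (Nv \<omega>))"
      using Nv_in[OF w] Tm_eq[OF w] Ti_eq[OF w] Ysp_in[OF w] Zsp_in[OF w]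
      unfolding AA_def Da_def Aa_def by simp
  qed
  have U2: "{\<omega>\<in>space M. (\<lambda>k\<in>{..<m}-{i}. TT n N1 X k \<omega>) \<in> D \<and> prod.swap (TT n N1 X i \<omega>) \<in> A} = (\<Union>a\<in>AA. E2 a)"
    unfolding E2_def
  proof (rule split_union)
    fix \<omega> assume w: "\<omega> \<in> space M"
    show "Nv \<omega> \<in> AA \<and> ((\<lambda>k\<in>{..<m}-{i}. TT n N1 X k \<omega>) \<in> D \<and> prod.swap (TT n N1 X i \<omega>) \<in> A
        \<longleftrightarrow> Y \<omega> \<in> Da (Nv \<omega>) \<and> Z \<omega> \<in> Fa (Nv \<omega>))"
      using Nv_in[OF w] Tm_eq[OF w] Tis_eq[OF w] Ysp_in[OF w] Zsp_in[OF w] Fsp_in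
      unfolding AA_def Da_def Aa_def Fa_def by simp
  qed
  have d1: "disjoint_family_on E1 AA" unfolding disjoint_family_on_def E1_def by auto
  have d2: "disjoint_family_on E2 AA" unfolding disjoint_family_on_def E2_def by auto
  have eqa: "measure M (E1 a) = measure M (E2 a)" if a: "a \<in> AA" for a
    unfolding E1_def E2_def Fa_def
    by (rule key2[OF _ Dam[OF a] Aam[OF a]]) (use a AA_def in simp)
  have "measure M (\<Union>a\<in>AA. E1 a) = (\<Sum>a\<in>AA. measure M (E1 a))"
    using fin E1m d1 by (intro finite_measure_finite_Union) auto
  also have "\<dots> = (\<Sum>a\<in>AA. measure M (E2 a))" using eqa by simp
  also have "\<dots> = measure M (\<Union>a\<in>AA. E2 a)"
    using fin E2m d2 by (intro finite_measure_finite_Union[symmetric]) auto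
  finally show ?thesis unfolding U1 U2 .
qed

end
lemma setint_ind:
  assumes "finite_measure M" "C \<in> sets M" "g \<in> measurable M N" "B \<in> sets N"
  shows "(\<integral>x\<in>C. indicator B (g x) \<partial>M) = measure M {x\<in>space M. x \<in> C \<and> g x \<in> B}"
proof -
  have "(\<integral>x\<in>C. indicator B (g x) \<partial>M) = (\<integral>x. indicator {x\<in>space M. x \<in> C \<and> g x \<in> B} x \<partial>M)"
    unfolding set_lebesgue_integral_def
    by (rule Bochner_Integration.integral_cong) (auto simp: indicator_def)
  also have "\<dots> = measure M {x\<in>space M. x \<in> C \<and> g x \<in> B}"
    by (simp add: Int_absorb2 subset_iff)
  finally show ?thesis .
qed

theorem theorem1:
  fixes M :: "'a measure" and m :: nat and n :: "nat \<Rightarrow> nat" and \<mu> :: "nat \<Rightarrow> real"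
    and X :: "nat \<Rightarrow> nat \<Rightarrow> 'a \<Rightarrow> real" and N1 :: "nat \<Rightarrow> 'a \<Rightarrow> nat set" and i :: nat
  assumes "prob_space M"
    and "m \<ge> 1"
    and "\<forall>k<m. n k \<ge> 2"
    and "\<forall>k<m. \<forall>j<n k. X k j \<in> borel_measurable M"
    and "\<forall>k<m. \<forall>j<n k. integrable M (\<lambda>\<omega>. X k j \<omega> - \<mu> k) \<and> (\<integral>\<omega>. X k j \<omega> - \<mu> k \<partial>M) = 0"
    and "\<forall>k<m. \<forall>\<omega>\<in>space M. N1 k \<omega> \<subseteq> {..<n k} \<and> card (N1 k \<omega>) = (n k + 1) div 2"
    and "(\<lambda>\<omega>. \<lambda>k\<in>{..<m}. N1 k \<omega>) \<in> M \<rightarrow>\<^sub>M PiM {..<m} (\<lambda>_. count_space UNIV)"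
    and "\<forall>A\<in>sets (PiM {..<m} (\<lambda>_. count_space UNIV)).
         \<forall>B\<in>sets (PiM {..<m} (\<lambda>k. PiM {..<n k} (\<lambda>_. borel))).
           measure M {\<omega>\<in>space M. (\<lambda>k\<in>{..<m}. N1 k \<omega>) \<in> A \<and>
                                   (\<lambda>k\<in>{..<m}. \<lambda>j\<in>{..<n k}. X k j \<omega>) \<in> B}
           = measure M {\<omega>\<in>space M. (\<lambda>k\<in>{..<m}. N1 k \<omega>) \<in> A} *
             measure M {\<omega>\<in>space M. (\<lambda>k\<in>{..<m}. \<lambda>j\<in>{..<n k}. X k j \<omega>) \<in> B}"
    and "i < m" and "\<mu> i = 0"
    and "\<exists>f :: (nat \<Rightarrow> nat \<Rightarrow> real) \<Rightarrow> real \<Rightarrow> real.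
           (\<lambda>(y, x). f y x) \<in> borel_measurable (others_space m n i \<Otimes>\<^sub>M borel) \<and>
           (\<forall>y x. f y x \<ge> 0) \<and>
           (\<forall>y\<in>space (others_space m n i). (\<integral>\<^sup>+ x. ennreal (f y x) \<partial>lborel) = 1) \<and>
           (\<forall>y x. f y (- x) = f y x) \<and>
           (\<forall>A\<in>sets (others_space m n i). \<forall>B\<in>sets (PiM {..<n i} (\<lambda>_. borel)).
              emeasure M {\<omega>\<in>space M. others_data m n X i \<omega> \<in> A \<and>
                                      (\<lambda>j\<in>{..<n i}. X i j \<omega> - \<mu> i) \<in> B}
              = (\<integral>\<^sup>+ \<omega>. indicator A (others_data m n X i \<omega>) *
                    (\<integral>\<^sup>+ e. indicator B e * (\<Prod>j<n i. ennreal (f (others_data m n X i \<omega>) (e j)))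
                       \<partial>PiM {..<n i} (\<lambda>_. lborel)) \<partial>M))"
  shows "\<forall>A\<in>sets (borel :: (real \<times> real) measure).
           AE \<omega> in M.
             real_cond_exp M (cond_alg M m n N1 X i) (\<lambda>\<omega>. indicator A (TT n N1 X i \<omega>)) \<omega>
           = real_cond_exp M (cond_alg M m n N1 X i) (\<lambda>\<omega>. indicator A (prod.swap (TT n N1 X i \<omega>))) \<omega>"
proof
  fix A :: "(real \<times> real) set" assume A: "A \<in> sets borel"
  note as = assms
  interpret prob_space M by (rule as(1))
  let ?F = "cond_alg M m n N1 X i"
  let ?Tm = "\<lambda>\<omega>. \<lambda>k\<in>{..<m} - {i}. TT n N1 X k \<omega>"
  have Tm: "?Tm \<in> measurable M (PiM ({..<m} - {i}) (\<lambda>_. borel))"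
    by (rule Tm_meas[OF as(1) as(4) as(6) as(7) as(9)])
  have Ti[measurable]: "TT n N1 X i \<in> borel_measurable M"
    by (rule TT_meas[OF as(1) as(4) as(6) as(7) as(9) as(9)])
  have setsF: "sets ?F = {?Tm -` D \<inter> space M | D. D \<in> sets (PiM ({..<m} - {i}) (\<lambda>_. borel))}"
    unfolding cond_alg_def by (rule sets_vimage_algebra2) (use measurable_space[OF Tm] in auto)
  have sub: "subalgebra M ?F"
  proof -
    have "space ?F = space M" unfolding cond_alg_def by simp
    moreover have "sets ?F \<subseteq> sets M" unfolding setsF using measurable_sets[OF Tm] by auto
    ultimately show ?thesis unfolding subalgebra_def by simp
  qed
  interpret finite_measure_subalgebra M ?F
    unfolding finite_measure_subalgebra_def finite_measure_subalgebra_axioms_def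
    using sub finite_measure_axioms by auto
  have A'[measurable]: "A \<in> sets borel" by (rule A)
  have f1m: "(\<lambda>\<omega>. indicator A (TT n N1 X i \<omega>) :: real) \<in> borel_measurable M" by measurable
  have "(\<lambda>x. prod.swap (TT n N1 X i x)) \<in> borel_measurable M"
    by (rule measurable_compose[OF Ti borel_measurable_continuous_onI[OF continuous_on_swap]])
  then have Tis[measurable]: "(\<lambda>x. prod.swap (TT n N1 X i x)) \<in> borel_measurable M" .
  have f2m: "(\<lambda>\<omega>. indicator A (prod.swap (TT n N1 X i \<omega>)) :: real) \<in> borel_measurable M" by measurable
  have f1i: "integrable M (\<lambda>\<omega>. indicator A (TT n N1 X i \<omega>) :: real)"
    by (rule integrable_const_bound[where B=1]) (auto simp: f1m indicator_def)
  have f2i: "integrable M (\<lambda>\<omega>. indicator A (prod.swap (TT n N1 X i \<omega>)) :: real)"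
    by (rule integrable_const_bound[where B=1]) (auto simp: f2m indicator_def)
  show "AE \<omega> in M. real_cond_exp M ?F (\<lambda>\<omega>. indicator A (TT n N1 X i \<omega>)) \<omega>
           = real_cond_exp M ?F (\<lambda>\<omega>. indicator A (prod.swap (TT n N1 X i \<omega>))) \<omega>"
  proof (rule real_cond_exp_charact[OF _ f1i])
    show "integrable M (real_cond_exp M ?F (\<lambda>\<omega>. indicator A (prod.swap (TT n N1 X i \<omega>))))"
      using f2i by (rule real_cond_exp_int)
    show "real_cond_exp M ?F (\<lambda>\<omega>. indicator A (prod.swap (TT n N1 X i \<omega>))) \<in> borel_measurable ?F"
      by (rule borel_measurable_cond_exp)
    fix C assume C: "C \<in> sets ?F"
    then obtain D where D: "D \<in> sets (PiM ({..<m} - {i}) (\<lambda>_. borel))" and CD: "C = ?Tm -` D \<inter> space M"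
      unfolding setsF by auto
    have CM: "C \<in> sets M" using C sub unfolding subalgebra_def by auto
    have "(\<integral>x\<in>C. real_cond_exp M ?F (\<lambda>\<omega>. indicator A (prod.swap (TT n N1 X i \<omega>))) x \<partial>M)
        = (\<integral>x\<in>C. indicator A (prod.swap (TT n N1 X i x)) \<partial>M)"
      by (rule real_cond_exp_intA[OF f2i C, symmetric])
    also have "\<dots> = (\<integral>x\<in>C. indicator (prod.swap -` A) (TT n N1 X i x) \<partial>M)"
      by (simp add: indicator_def)
    also have "\<dots> = measure M {x\<in>space M. x \<in> C \<and> TT n N1 X i x \<in> prod.swap -` A}"
      by (rule setint_ind[OF finite_measure_axioms CM Ti measurable_sets_borel[OF borel_measurable_continuous_onI[OF continuous_on_swap] A]])
    also have "\<dots> = measure M {\<omega>\<in>space M. ?Tm \<omega> \<in> D \<and> prod.swap (TT n N1 X i \<omega>) \<in> A}"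
      unfolding CD by (intro arg_cong[where f="measure M"]) auto
    also have "\<dots> = measure M {\<omega>\<in>space M. ?Tm \<omega> \<in> D \<and> TT n N1 X i \<omega> \<in> A}"
      by (rule key[of M m n X N1 i \<mu> D A, OF as(1) as(4) as(6) as(7) as(8) as(9) as(10) as(11) D A, symmetric])
    also have "\<dots> = measure M {x\<in>space M. x \<in> C \<and> TT n N1 X i x \<in> A}"
      unfolding CD by (intro arg_cong[where f="measure M"]) auto
    also have "\<dots> = (\<integral>x\<in>C. indicator A (TT n N1 X i x) \<partial>M)"
      by (rule setint_ind[OF finite_measure_axioms CM Ti A, symmetric])
    finally show "(\<integral>x\<in>C. indicator A (TT n N1 X i x) \<partial>M)
        = (\<integral>x\<in>C. real_cond_exp M ?F (\<lambda>\<omega>. indicator A (prod.swap (TT n N1 X i \<omega>))) x \<partial>M)" by simp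
  qed
qed


end
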